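(* Let $G$ be a finite $p$-group and let $N, C_1, C_2$ be normal subgroups of $G$ with $C_1\subseteq C_2$. Let $P:=\{g\in N : [g,C_2]\subseteq[C_1,N]\}$. Then: (1) $\{g\in N : b_{C_1}(g)\geq b_{C_2}(g)\}\subseteq P$; (2) $P$ is a normal subgroup of $G$; (3) if $P=N$, then $[C_1,N]=[C_2,N]$.
   Context: Commutators are $[x,y]=x^{-1}y^{-1}xy$; for $g\in G$ and a subgroup $H$, $[g,H]=\{[g,h]:h\in H\}$; for subgroups $G_1,G_2$, $[G_1,G_2]$ is the subgroup generated by all $[g_1,g_2]$, $g_i\in G_i$. For a subgroup $K$ of $G$ and $g\in G$, $b_K(g):=\log_p|K:K\cap Z_G(g)|$, where $Z_G(g)$ is the centralizer of $g$ in $G$. *)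

theory Defs
  imports "HOL-Algebra.Algebra"
begin

definition comm :: "('a, 'b) monoid_scheme \<Rightarrow> 'a \<Rightarrow> 'a \<Rightarrow> 'a" where
  "comm G x y = inv\<^bsub>G\<^esub> x \<otimes>\<^bsub>G\<^esub> inv\<^bsub>G\<^esub> y \<otimes>\<^bsub>G\<^esub> x \<otimes>\<^bsub>G\<^esub> y"

definition comm_elt_set :: "('a, 'b) monoid_scheme \<Rightarrow> 'a \<Rightarrow> 'a set \<Rightarrow> 'a set" where
  "comm_elt_set G g H = {comm G g h | h. h \<in> H}"

definition comm_subgroup :: "('a, 'b) monoid_scheme \<Rightarrow> 'a set \<Rightarrow> 'a set \<Rightarrow> 'a set" where
  "comm_subgroup G G1 G2 = generate G {comm G x y | x y. x \<in> G1 \<and> y \<in> G2}"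

definition centralizer_elt :: "('a, 'b) monoid_scheme \<Rightarrow> 'a \<Rightarrow> 'a set" where
  "centralizer_elt G g = {x \<in> carrier G. x \<otimes>\<^bsub>G\<^esub> g = g \<otimes>\<^bsub>G\<^esub> x}"

definition b_index :: "('a, 'b) monoid_scheme \<Rightarrow> nat \<Rightarrow> 'a set \<Rightarrow> 'a \<Rightarrow> real" where
  "b_index G p K g = log (real p) (real (card K) / real (card (K \<inter> centralizer_elt G g)))"

end

theory Submission imports Defs begin

context group begin

lemma inv_cancel_l[simp]: "x \<in> carrier G \<Longrightarrow> y \<in> carrier G \<Longrightarrow> inv x \<otimes> (x \<otimes> y) = y"
  by (simp add: m_assoc[symmetric])
lemma inv_cancel_r[simp]: "x \<in> carrier G \<Longrightarrow> y \<in> carrier G \<Longrightarrow> x \<otimes> (inv x \<otimes> y) = y"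
  by (simp add: m_assoc[symmetric])

lemma comm_closed[simp]: "x \<in> carrier G \<Longrightarrow> y \<in> carrier G \<Longrightarrow> comm G x y \<in> carrier G"
  by (simp add: comm_def)

lemma comm_inv: "x \<in> carrier G \<Longrightarrow> y \<in> carrier G \<Longrightarrow> inv (comm G x y) = comm G y x"
  by (simp add: comm_def inv_mult_group m_assoc)

lemma comm_mult: "g \<in> carrier G \<Longrightarrow> g' \<in> carrier G \<Longrightarrow> h \<in> carrier G \<Longrightarrow>
  comm G (g \<otimes> g') h = inv g' \<otimes> comm G g h \<otimes> g' \<otimes> comm G g' h"
  by (simp add: comm_def inv_mult_group m_assoc)

lemma comm_invl: "g \<in> carrier G \<Longrightarrow> h \<in> carrier G \<Longrightarrow>
  comm G (inv g) h = g \<otimes> inv (comm G g h) \<otimes> inv g"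
  by (simp add: comm_def inv_mult_group m_assoc)

lemma comm_conj: "g \<in> carrier G \<Longrightarrow> x \<in> carrier G \<Longrightarrow> h \<in> carrier G \<Longrightarrow>
  comm G (x \<otimes> g \<otimes> inv x) h = x \<otimes> comm G g (inv x \<otimes> h \<otimes> x) \<otimes> inv x"
  by (simp add: comm_def inv_mult_group m_assoc)


lemma comm_subgroup_normal:
  assumes "A \<lhd> G" "B \<lhd> G"
  shows "comm_subgroup G A B \<lhd> G"
  unfolding comm_subgroup_def
proof (rule normal_generateI)
  have "A \<subseteq> carrier G" "B \<subseteq> carrier G" using assms normal_imp_subgroup subgroup.subset by blast+
  then show "{comm G x y |x y. x \<in> A \<and> y \<in> B} \<subseteq> carrier G" by (auto intro!: comm_closed)
next
  fix h g assume h: "h \<in> {comm G x y |x y. x \<in> A \<and> y \<in> B}" and g: "g \<in> carrier G"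
  then obtain x y where xy: "x \<in> A" "y \<in> B" "h = comm G x y" by auto
  have c: "x \<in> carrier G" "y \<in> carrier G" using xy assms normal_imp_subgroup subgroup.subset by blast+
  have "g \<otimes> h \<otimes> inv g = comm G (g \<otimes> x \<otimes> inv g) (g \<otimes> y \<otimes> inv g)"
    using c g by (simp add: xy comm_def inv_mult_group m_assoc)
  moreover have "g \<otimes> x \<otimes> inv g \<in> A" "g \<otimes> y \<otimes> inv g \<in> B"
    using assms xy g by (simp_all add: normal.inv_op_closed2)
  ultimately show "g \<otimes> h \<otimes> inv g \<in> {comm G x y |x y. x \<in> A \<and> y \<in> B}" by blast
qed

lemma card_comm_elt_set:
  assumes fin: "finite (carrier G)" and K: "subgroup K G" and g: "g \<in> carrier G"
  shows "real (card K) / real (card (K \<inter> centralizer_elt G g)) = real (card (comm_elt_set G g K))"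
proof -
  let ?H = "G\<lparr>carrier := K\<rparr>"
  let ?phi = "\<lambda>k. \<lambda>h\<in>carrier G. k \<otimes> h \<otimes> inv k"
  have Ksub: "K \<subseteq> carrier G" using K subgroup.subset by blast
  interpret A: group_action ?H "carrier G" ?phi
    unfolding group_action_def
    using group_hom.induced_group_hom'[OF action_by_conjugation[unfolded group_action_def] K] .
  have os: "card (orbit ?H ?phi g) * card (stabilizer ?H ?phi g) = order ?H"
    using A.orbit_stabilizer_theorem g by blast
  have ord: "order ?H = card K" by (simp add: order_def)
  have orb: "orbit ?H ?phi g = {k \<otimes> g \<otimes> inv k | k. k \<in> K}"
    using g by (auto simp: orbit_def)
  have stab: "stabilizer ?H ?phi g = K \<inter> centralizer_elt G g"
  proof -
    have "k \<otimes> g \<otimes> inv k = g \<longleftrightarrow> k \<otimes> g = g \<otimes> k" if "k \<in> K" for k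
    proof -
      have k: "k \<in> carrier G" using that Ksub by blast
      show ?thesis
        using k g by (metis inv_closed m_closed inv_solve_right)
    qed
    then show ?thesis using g Ksub by (auto simp: stabilizer_def centralizer_elt_def)
  qed
  have e1: "{k \<otimes> g \<otimes> inv k | k. k \<in> K} = {inv k \<otimes> g \<otimes> k | k. k \<in> K}"
  proof -
    have "\<And>k. k \<in> K \<Longrightarrow> inv k \<in> K \<and> inv (inv k) = k"
      using K Ksub subgroup.m_inv_closed by (metis inv_inv subsetD)
    then show ?thesis by (smt (verit) Collect_cong) 
  qed
  have e2: "comm_elt_set G g K = (\<lambda>x. inv g \<otimes> x) ` {inv k \<otimes> g \<otimes> k | k. k \<in> K}"
  proof -
    have cf: "comm G g k = inv g \<otimes> (inv k \<otimes> g \<otimes> k)" if "k \<in> K" for k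
      using that Ksub g by (auto simp: comm_def m_assoc)
    have "comm_elt_set G g K = {inv g \<otimes> (inv k \<otimes> g \<otimes> k) | k. k \<in> K}"
      unfolding comm_elt_set_def using cf by (auto; metis)
    then show ?thesis by blast
  qed
  have inj: "inj_on (\<lambda>x. inv g \<otimes> x) (carrier G)"
    using g by (simp add: inj_on_def)
  have "card (comm_elt_set G g K) = card {inv k \<otimes> g \<otimes> k | k. k \<in> K}"
    unfolding e2 by (rule card_image, rule inj_on_subset[OF inj]) (use Ksub g in auto)
  then have co: "card (comm_elt_set G g K) = card (orbit ?H ?phi g)" using orb e1 by simp
  have fs: "finite (K \<inter> centralizer_elt G g)" using fin Ksub finite_subset by blast
  have "\<one> \<in> K \<inter> centralizer_elt G g" using K g by (auto simp: centralizer_elt_def subgroup.one_closed)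
  then have "card (K \<inter> centralizer_elt G g) > 0" using fs card_gt_0_iff by blast
  then show ?thesis using os ord stab co
    by (metis (mono_tags, lifting) nonzero_mult_div_cancel_right of_nat_0_less_iff of_nat_mult less_irrefl)
qed

lemma lemma1_aux:
  fixes p n :: nat and N C1 C2 :: "'a set"
  assumes "finite (carrier G)" and "Factorial_Ring.prime p" and "order G = p ^ n"
    and "N \<lhd> G" and "C1 \<lhd> G" and "C2 \<lhd> G" and "C1 \<subseteq> C2"
  defines "P \<equiv> {g \<in> N. comm_elt_set G g C2 \<subseteq> comm_subgroup G C1 N}"
  shows "{g \<in> N. b_index G p C1 g \<ge> b_index G p C2 g} \<subseteq> P
     \<and> P \<lhd> G
     \<and> (P = N \<longrightarrow> comm_subgroup G C1 N = comm_subgroup G C2 N)"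
proof -
  have Ns: "N \<subseteq> carrier G" and C1s: "C1 \<subseteq> carrier G" and C2s: "C2 \<subseteq> carrier G"
    using assms(4-6) normal_imp_subgroup subgroup.subset by blast+
  define D where "D = comm_subgroup G C1 N"
  have DN: "D \<lhd> G" unfolding D_def using comm_subgroup_normal assms(4,5) by blast
  have Dsg: "subgroup D G" using DN normal_imp_subgroup by blast
  have gen1: "comm G x y \<in> D" if "x \<in> C1" "y \<in> N" for x y
    unfolding D_def comm_subgroup_def using that by (blast intro: generate.incl)
  have gen2: "comm G y x \<in> D" if "x \<in> C1" "y \<in> N" for x y
  proof -
    have "inv (comm G x y) \<in> D" by (rule subgroup.m_inv_closed[OF Dsg gen1[OF that]])
    moreover have "inv (comm G x y) = comm G y x" using comm_inv that C1s Ns by blast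
    ultimately show ?thesis by simp
  qed
  have conjD: "x \<otimes> d \<otimes> inv x \<in> D" if "x \<in> carrier G" "d \<in> D" for x d
    by (rule normal.inv_op_closed2[OF DN that])
  have Dc: "D \<subseteq> carrier G" using Dsg subgroup.subset by blast
  have P_alt: "P = {g \<in> N. \<forall>h\<in>C2. comm G g h \<in> D}"
    unfolding P_def D_def comm_elt_set_def by blast
  have part1: "{g \<in> N. b_index G p C1 g \<ge> b_index G p C2 g} \<subseteq> P"
  proof
    fix g assume "g \<in> {g \<in> N. b_index G p C1 g \<ge> b_index G p C2 g}"
    then have gN: "g \<in> N" and b: "b_index G p C1 g \<ge> b_index G p C2 g" by auto
    have g: "g \<in> carrier G" using gN Ns by blast
    have sg1: "subgroup C1 G" and sg2: "subgroup C2 G" using assms(5,6) normal_imp_subgroup by blast+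
    have e1: "b_index G p C1 g = log (real p) (real (card (comm_elt_set G g C1)))"
      unfolding b_index_def using card_comm_elt_set[OF assms(1) sg1 g] by simp
    have e2: "b_index G p C2 g = log (real p) (real (card (comm_elt_set G g C2)))"
      unfolding b_index_def using card_comm_elt_set[OF assms(1) sg2 g] by simp
    have fin2: "finite (comm_elt_set G g C2)"
    proof -
      have "comm_elt_set G g C2 \<subseteq> carrier G" using C2s g by (auto simp: comm_elt_set_def)
      then show ?thesis using assms(1) finite_subset by blast
    qed
    have sub: "comm_elt_set G g C1 \<subseteq> comm_elt_set G g C2"
      using assms(7) by (auto simp: comm_elt_set_def)
    have "comm G g \<one> \<in> comm_elt_set G g C1"
      using subgroup.one_closed[OF sg1] unfolding comm_elt_set_def by blast
    then have pos: "card (comm_elt_set G g C1) > 0"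
      using fin2 sub finite_subset card_gt_0_iff by blast
    have p1: "real p > 1" using assms(2) prime_gt_1_nat by simp
    have pos2: "card (comm_elt_set G g C2) > 0"
      using pos card_mono[OF fin2 sub] by linarith
    have "log (real p) (real (card (comm_elt_set G g C2))) \<le> log (real p) (real (card (comm_elt_set G g C1)))"
      using b e1 e2 by simp
    then have "real (card (comm_elt_set G g C2)) \<le> real (card (comm_elt_set G g C1))"
      using log_le_cancel_iff[OF p1] pos pos2 by simp
    then have "card (comm_elt_set G g C2) \<le> card (comm_elt_set G g C1)" by simp
    then have eq: "comm_elt_set G g C1 = comm_elt_set G g C2"
      using card_seteq[OF fin2 sub] by simp
    show "g \<in> P" unfolding P_alt
    proof (intro CollectI conjI ballI gN)
      fix h assume "h \<in> C2"
      then have "comm G g h \<in> comm_elt_set G g C2" unfolding comm_elt_set_def by blast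
      then have "comm G g h \<in> comm_elt_set G g C1" using eq by simp
      then obtain c where "c \<in> C1" "comm G g h = comm G g c" unfolding comm_elt_set_def by blast
      then show "comm G g h \<in> D" using gen2 gN by simp
    qed
  qed
  have Pc: "P \<subseteq> carrier G" using Ns unfolding P_alt by blast
  have C2conj: "x \<otimes> h \<otimes> inv x \<in> C2" if "x \<in> carrier G" "h \<in> C2" for x h
    by (rule normal.inv_op_closed2[OF assms(6) that])
  have Nconj: "x \<otimes> h \<otimes> inv x \<in> N" if "x \<in> carrier G" "h \<in> N" for x h
    by (rule normal.inv_op_closed2[OF assms(4) that])
  have sgN: "subgroup N G" using assms(4) normal_imp_subgroup by blast
  have Psg: "subgroup P G"
  proof (rule subgroupI[OF Pc])
    have "\<one> \<in> P" unfolding P_alt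
    proof (intro CollectI conjI ballI)
      show "\<one> \<in> N" by (rule subgroup.one_closed[OF sgN])
      fix h assume "h \<in> C2"
      then have "h \<in> carrier G" using C2s by blast
      then have "comm G \<one> h = \<one>" by (simp add: comm_def m_assoc)
      then show "comm G \<one> h \<in> D" using subgroup.one_closed[OF Dsg] by simp
    qed
    then show "P \<noteq> {}" by blast
  next
    fix a assume a: "a \<in> P"
    then have aN: "a \<in> N" and ac: "a \<in> carrier G" and ah: "\<And>h. h \<in> C2 \<Longrightarrow> comm G a h \<in> D"
      using Ns unfolding P_alt by blast+
    show "inv a \<in> P" unfolding P_alt
    proof (intro CollectI conjI ballI)
      show "inv a \<in> N" by (rule subgroup.m_inv_closed[OF sgN aN])
      fix h assume h: "h \<in> C2"
      then have hc: "h \<in> carrier G" using C2s by blast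
      have "inv (comm G a h) \<in> D" by (rule subgroup.m_inv_closed[OF Dsg ah[OF h]])
      then show "comm G (inv a) h \<in> D" using comm_invl[OF ac hc] conjD[OF ac] by simp
    qed
  next
    fix a b assume a: "a \<in> P" and b: "b \<in> P"
    then have aN: "a \<in> N" and ac: "a \<in> carrier G" and ah: "\<And>h. h \<in> C2 \<Longrightarrow> comm G a h \<in> D"
      and bN: "b \<in> N" and bc: "b \<in> carrier G" and bh: "\<And>h. h \<in> C2 \<Longrightarrow> comm G b h \<in> D"
      using Ns unfolding P_alt by blast+
    show "a \<otimes> b \<in> P" unfolding P_alt
    proof (intro CollectI conjI ballI)
      show "a \<otimes> b \<in> N" by (rule subgroup.m_closed[OF sgN aN bN])
      fix h assume h: "h \<in> C2"
      then have hc: "h \<in> carrier G" using C2s by blast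
      have "inv b \<otimes> comm G a h \<otimes> inv (inv b) \<in> D" using conjD[OF inv_closed[OF bc] ah[OF h]] .
      then have "inv b \<otimes> comm G a h \<otimes> b \<in> D" using bc by simp
      then have "inv b \<otimes> comm G a h \<otimes> b \<otimes> comm G b h \<in> D"
        using subgroup.m_closed[OF Dsg _ bh[OF h]] by blast
      then show "comm G (a \<otimes> b) h \<in> D" using comm_mult[OF ac bc hc] by simp
    qed
  qed
  have part2: "P \<lhd> G"
  proof (rule normal_invI[OF Psg])
    fix x g assume x: "x \<in> carrier G" and g: "g \<in> P"
    then have gN: "g \<in> N" and gc: "g \<in> carrier G" and gh: "\<And>h. h \<in> C2 \<Longrightarrow> comm G g h \<in> D"
      using Ns unfolding P_alt by blast+
    show "x \<otimes> g \<otimes> inv x \<in> P" unfolding P_alt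
    proof (intro CollectI conjI ballI)
      show "x \<otimes> g \<otimes> inv x \<in> N" using Nconj x gN by blast
      fix h assume h: "h \<in> C2"
      then have hc: "h \<in> carrier G" using C2s by blast
      have "inv x \<otimes> h \<otimes> inv (inv x) \<in> C2" using C2conj[OF inv_closed[OF x] h] .
      then have "inv x \<otimes> h \<otimes> x \<in> C2" using x by simp
      then have "comm G g (inv x \<otimes> h \<otimes> x) \<in> D" using gh by blast
      then show "comm G (x \<otimes> g \<otimes> inv x) h \<in> D"
        using comm_conj[OF gc x hc] conjD[OF x] by simp
    qed
  qed
  have part3: "P = N \<longrightarrow> comm_subgroup G C1 N = comm_subgroup G C2 N"
  proof
    assume PN: "P = N"
    show "comm_subgroup G C1 N = comm_subgroup G C2 N"
    proof
      show "comm_subgroup G C1 N \<subseteq> comm_subgroup G C2 N"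
        unfolding comm_subgroup_def using assms(7) by (intro mono_generate) blast
    next
      have "{comm G x y |x y. x \<in> C2 \<and> y \<in> N} \<subseteq> D"
      proof safe
        fix x y assume x: "x \<in> C2" and y: "y \<in> N"
        then have "comm G y x \<in> D" using PN unfolding P_alt by blast
        then have "inv (comm G y x) \<in> D" by (rule subgroup.m_inv_closed[OF Dsg])
        moreover have "inv (comm G y x) = comm G x y" using comm_inv x y Ns C2s by blast
        ultimately show "comm G x y \<in> D" by simp
      qed
      then show "comm_subgroup G C2 N \<subseteq> comm_subgroup G C1 N"
        unfolding comm_subgroup_def[of G C2 N] D_def[symmetric]
        using generate_subgroup_incl Dsg by blast
    qed
  qed
  show ?thesis using part1 part2 part3 by blast
qed

end

theorem lemma1:
  fixes G :: "('a, 'b) monoid_scheme" and p n :: nat and N C1 C2 :: "'a set"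
  assumes "group G" and "finite (carrier G)" and "Factorial_Ring.prime p" and "order G = p ^ n"
    and "N \<lhd> G" and "C1 \<lhd> G" and "C2 \<lhd> G" and "C1 \<subseteq> C2"
  defines "P \<equiv> {g \<in> N. comm_elt_set G g C2 \<subseteq> comm_subgroup G C1 N}"
  shows "{g \<in> N. b_index G p C1 g \<ge> b_index G p C2 g} \<subseteq> P
     \<and> P \<lhd> G
     \<and> (P = N \<longrightarrow> comm_subgroup G C1 N = comm_subgroup G C2 N)"
  using group.lemma1_aux[OF assms(1) assms(2-8)] unfolding P_def by blast

end
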